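(* Fix $k\in\mathbb{Z}_{\geq 0}$ and $X\in\{U,V\}$. For all integers $r$ and $i$: 1. $X_i^r$ is the disjoint union of the sets $X^r_{i,wc}$, $X^r_{i,\overline{wc},\mathrm{left}}$ and $X^r_{i,\overline{wc},\mathrm{right}}$. 2. There is a bijection between $X^r_{i,\overline{wc},\mathrm{right}}$ and $X^r_{i-1,\overline{wc},\mathrm{left}}$ which preserves the value of a word in $\mathcal{A}_k$ (i.e. a word and its image are equal as elements of $\mathcal{A}_k$). 3. The sets $X^r_{0,\overline{wc},\mathrm{right}}$, $V^r_{r-1,\overline{wc},\mathrm{left}}$, $U^r_{r-2,\overline{wc},\mathrm{left}}$, and $X^r_i$ for $i<0$, are empty.
   Context: Indices are elements of $\mathbb{Z}/(k+1)\mathbb{Z}$, identified with $[0,k]=\{0,\dots,k\}$. $\mathcal{A}_k$ is the associative $\mathbb{Z}$-algebra with generators $A_0,\dots,A_k$ subject only to $A_iA_{i+1}A_i=A_{i+1}A_iA_{i+1}$ for all $i$ and $A_iA_j=A_jA_i$ whenever $i-j\not\equiv\pm1 \pmod{k+1}$ (no relation is imposed on $A_i^2$). A word is a finite sequence $(i_1,\dots,i_m)$ of indices, written $A_{i_1\dots i_m}$; its value is $A_{i_1}\cdots A_{i_m}\in\mathcal{A}_k$, its weak length is $\widetilde{l}=m$, and its support $supp$ is the set $\{i_1,\dots,i_m\}$. For a proper subset $S\subsetneq[0,k]$, let $a$ be the smallest element of $[0,k]$ not in $S$; the canonical cyclic interval $I_S$ is the total order $a+1<a+2<\dots<k<0<1<\dots<a-1$.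 A word $u=A_{i_1\dots i_m}$ with $supp(u)$ a proper subset of $[0,k]$ is a weak hook word if, with respect to $I_{supp(u)}$, for some $j$ either (a) $i_1>\dots>i_j<i_{j+1}<\dots<i_m$ (hook type $V$; left side = letters $i_1,\dots,i_j$, right side = letters $i_j,\dots,i_m$), or (b) $i_1>\dots>i_j=i_{j+1}<\dots<i_m$ (hook type $U$; left side = $i_1,\dots,i_j$, right side = $i_{j+1},\dots,i_m$). $asc(u)$ is the number of $t$ with $i_t<i_{t+1}$ in $I_{supp(u)}$. The word $u$ is $k$-connected if $supp(u)$ is an interval of $I_{supp(u)}$. Otherwise, consider all pairs of letters $a<c$ of $u$ (in $I_{supp(u)}$) with $a\not\equiv c-1\pmod{k+1}$ and no letter $b$ of $u$ with $a<b<c$; let $u_{min}$ be the smallest such $c$; it occurs once or twice in $u$ (if twice, then once on each side). $u$ is $k$-weak connected if it is $k$-connected or $u_{min}$ occurs twice (on both sides). For $X\in\{U,V\}$: $X^r_i$ is the set of weak hook words of hook type $X$, weak length $r$ and $asc=i$; $X^r_{i,wc}$ is the subset of $k$-weak connected ones; $X^r_{i,\overline{wc},\mathrm{left}}$ (resp. $X^r_{i,\overline{wc},\mathrm{right}}$) is the subset of words that are not $k$-weak connected and whose unique occurrence of $u_{min}$ is on the left (resp. right) side. *)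

theory Defs
  imports Main
begin

text \<open>Elements of the free associative Z-algebra on A_0..A_k are represented as
finitely supported Z-valued functions on words (lists of indices).  We only need
the basis elements (words) and the two-sided ideal generated by the defining
relations.\<close>

definition wmono :: "nat list \<Rightarrow> (nat list \<Rightarrow> int)" where
  "wmono w = (\<lambda>x. if x = w then 1 else 0)"

definition ksucc :: "nat \<Rightarrow> nat \<Rightarrow> nat" where
  "ksucc k i = (i + 1) mod (k + 1)"

definition krels :: "nat \<Rightarrow> (nat list \<times> nat list) set" where
  "krels k =
     {([i, ksucc k i, i], [ksucc k i, i, ksucc k i]) | i. i \<le> k}
   \<union> {([i, j], [j, i]) | i j. i \<le> k \<and> j \<le> k \<and>
        (int i - int j) mod int (k + 1) \<noteq> 1 mod int (k + 1) \<and>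
        (int i - int j) mod int (k + 1) \<noteq> (-1) mod int (k + 1)}"

inductive_set kideal :: "nat \<Rightarrow> (nat list \<Rightarrow> int) set" for k where
  zero: "(\<lambda>_. 0) \<in> kideal k"
| step: "\<lbrakk> x \<in> kideal k; (p, q) \<in> krels k; set u \<subseteq> {0..k}; set v \<subseteq> {0..k} \<rbrakk>
         \<Longrightarrow> (\<lambda>w. x w + c * (wmono (u @ p @ v) w - wmono (u @ q @ v) w)) \<in> kideal k"

definition same_value :: "nat \<Rightarrow> nat list \<Rightarrow> nat list \<Rightarrow> bool" where
  "same_value k u v \<longleftrightarrow> (\<lambda>w. wmono u w - wmono v w) \<in> kideal k"

definition cmiss :: "nat \<Rightarrow> nat set \<Rightarrow> nat" where
  "cmiss k S = (LEAST a. a \<le> k \<and> a \<notin> S)"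

text \<open>Position of index x in the order a+1 < a+2 < ... < k < 0 < ... < a-1.\<close>
definition cpos :: "nat \<Rightarrow> nat set \<Rightarrow> nat \<Rightarrow> nat" where
  "cpos k S x = (x + k - cmiss k S) mod (k + 1)"

definition clt :: "nat \<Rightarrow> nat set \<Rightarrow> nat \<Rightarrow> nat \<Rightarrow> bool" where
  "clt k S x y \<longleftrightarrow> cpos k S x < cpos k S y"

datatype hooktype = U | V

text \<open>Hook of type V with bottom letter at (0-based) position j.\<close>
definition hookV :: "nat \<Rightarrow> nat list \<Rightarrow> nat \<Rightarrow> bool" where
  "hookV k u j \<longleftrightarrow> j < length u
     \<and> (\<forall>t. t < j \<longrightarrow> clt k (set u) (u ! (t+1)) (u ! t))
     \<and> (\<forall>t. j \<le> t \<and> t + 1 < length u \<longrightarrow> clt k (set u) (u ! t) (u ! (t+1)))"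

text \<open>Hook of type U with repeated letter at (0-based) positions j, j+1.\<close>
definition hookU :: "nat \<Rightarrow> nat list \<Rightarrow> nat \<Rightarrow> bool" where
  "hookU k u j \<longleftrightarrow> j + 1 < length u \<and> u ! j = u ! (j+1)
     \<and> (\<forall>t. t < j \<longrightarrow> clt k (set u) (u ! (t+1)) (u ! t))
     \<and> (\<forall>t. j + 1 \<le> t \<and> t + 1 < length u \<longrightarrow> clt k (set u) (u ! t) (u ! (t+1)))"

definition hook :: "hooktype \<Rightarrow> nat \<Rightarrow> nat list \<Rightarrow> nat \<Rightarrow> bool" where
  "hook X k u j = (case X of U \<Rightarrow> hookU k u j | V \<Rightarrow> hookV k u j)"

definition on_left :: "hooktype \<Rightarrow> nat \<Rightarrow> nat \<Rightarrow> bool" where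
  "on_left X j t \<longleftrightarrow> t \<le> j"

definition on_right :: "hooktype \<Rightarrow> nat \<Rightarrow> nat \<Rightarrow> bool" where
  "on_right X j t \<longleftrightarrow> (case X of V \<Rightarrow> j \<le> t | U \<Rightarrow> j + 1 \<le> t)"

definition asc :: "nat \<Rightarrow> nat list \<Rightarrow> nat" where
  "asc k u = card {t. t + 1 < length u \<and> clt k (set u) (u ! t) (u ! (t+1))}"

definition kconnected :: "nat \<Rightarrow> nat list \<Rightarrow> bool" where
  "kconnected k u \<longleftrightarrow> (\<forall>x\<in>set u. \<forall>y\<in>set u. \<forall>c\<le>k.
      cpos k (set u) x \<le> cpos k (set u) c \<and> cpos k (set u) c \<le> cpos k (set u) y
      \<longrightarrow> c \<in> set u)"

definition gap_tops :: "nat \<Rightarrow> nat list \<Rightarrow> nat set" where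
  "gap_tops k u = {c \<in> set u. \<exists>a\<in>set u. clt k (set u) a c
      \<and> (int a) mod int (k+1) \<noteq> (int c - 1) mod int (k+1)
      \<and> \<not> (\<exists>b\<in>set u. clt k (set u) a b \<and> clt k (set u) b c)}"

definition umin :: "nat \<Rightarrow> nat list \<Rightarrow> nat" where
  "umin k u = (THE c. c \<in> gap_tops k u \<and> (\<forall>c'\<in>gap_tops k u. cpos k (set u) c \<le> cpos k (set u) c'))"

definition weak_hook_word :: "hooktype \<Rightarrow> nat \<Rightarrow> nat list \<Rightarrow> bool" where
  "weak_hook_word X k u \<longleftrightarrow> set u \<subset> {0..k} \<and> (\<exists>j. hook X k u j)"

definition kweak_connected :: "nat \<Rightarrow> nat list \<Rightarrow> bool" where
  "kweak_connected k u \<longleftrightarrow> kconnected k u \<or> count_list u (umin k u) = 2"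

definition Xset :: "hooktype \<Rightarrow> nat \<Rightarrow> int \<Rightarrow> int \<Rightarrow> nat list set" where
  "Xset X k r i = {u. weak_hook_word X k u \<and> int (length u) = r \<and> int (asc k u) = i}"

definition Xwc :: "hooktype \<Rightarrow> nat \<Rightarrow> int \<Rightarrow> int \<Rightarrow> nat list set" where
  "Xwc X k r i = {u \<in> Xset X k r i. kweak_connected k u}"

definition Xleft :: "hooktype \<Rightarrow> nat \<Rightarrow> int \<Rightarrow> int \<Rightarrow> nat list set" where
  "Xleft X k r i = {u \<in> Xset X k r i. \<not> kweak_connected k u
      \<and> count_list u (umin k u) = 1
      \<and> (\<exists>j t. hook X k u j \<and> t < length u \<and> u ! t = umin k u \<and> on_left X j t)}"

definition Xright :: "hooktype \<Rightarrow> nat \<Rightarrow> int \<Rightarrow> int \<Rightarrow> nat list set" where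
  "Xright X k r i = {u \<in> Xset X k r i. \<not> kweak_connected k u
      \<and> count_list u (umin k u) = 1
      \<and> (\<exists>j t. hook X k u j \<and> t < length u \<and> u ! t = umin k u \<and> on_right X j t)}"

end

theory Submission imports Defs begin

lemma cmiss_props:
  assumes "S \<subset> {0..k}"
  shows "cmiss k S \<le> k \<and> cmiss k S \<notin> S"
proof -
  obtain a where "a \<in> {0..k}" "a \<notin> S" using psubset_imp_ex_mem[OF assms] by auto
  then have "a \<le> k \<and> a \<notin> S" by simp
  from LeastI[of "\<lambda>a. a \<le> k \<and> a \<notin> S", OF this] show ?thesis unfolding cmiss_def .
qed

lemma cpos_formula:
  fixes m k x :: nat
  assumes "m \<le> k" "x \<le> k"
  shows "(x + k - m) mod (k + 1) = (if m < x then x - m - 1 else x + k - m)"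
proof (cases "m < x")
  case True
  then have "x + k - m = (x - m - 1) + (k+1)" using assms by arith
  then have "(x + k - m) mod (k + 1) = (x - m - 1) mod (k+1)" by (metis mod_add_self2)
  also have "\<dots> = x - m - 1" using assms by simp
  finally show ?thesis using True by simp
next
  case False
  then show ?thesis using assms by simp
qed

lemma cpos_eq:
  assumes "S \<subset> {0..k}" "x \<le> k"
  shows "cpos k S x = (if cmiss k S < x then x - cmiss k S - 1 else x + k - cmiss k S)"
  using cpos_formula[of "cmiss k S" k x] cmiss_props[OF assms(1)] assms unfolding cpos_def by simp

lemma cpos_inj:
  assumes "S \<subset> {0..k}" "x \<le> k" "y \<le> k" "cpos k S x = cpos k S y"
  shows "x = y"
  using assms cpos_eq[OF assms(1) assms(2)] cpos_eq[OF assms(1) assms(3)] cmiss_props[OF assms(1)]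
  by (auto split: if_splits)

lemma cpos_lt_k:
  assumes "S \<subset> {0..k}" "x \<in> S"
  shows "cpos k S x < k"
proof -
  have "x \<le> k" using assms by auto
  moreover have "x \<noteq> cmiss k S" using cmiss_props[OF assms(1)] assms by auto
  ultimately show ?thesis using cpos_eq[OF assms(1)] cmiss_props[OF assms(1)]
    by (auto split: if_splits)
qed

lemma cpos_cong:
  assumes "S \<subset> {0..k}" "x \<le> k" "y \<le> k"
  shows "(int x - int y) mod int (k+1) = (int (cpos k S x) - int (cpos k S y)) mod int (k+1)"
proof -
  define m where "m = cmiss k S"
  have m: "m \<le> k" using cmiss_props[OF assms(1)] m_def by simp
  have ex: "\<exists>e::int. int (cpos k S x) - int (cpos k S y) = int x - int y + e * int (k+1)"
    using cpos_eq[OF assms(1) assms(2)] cpos_eq[OF assms(1) assms(3)] m assms(2,3)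
    unfolding m_def[symmetric]
    apply (cases "m < x"; cases "m < y")
       apply (rule exI[of _ 0]; simp)
      apply (rule exI[of _ "-1"]; simp)
     apply (rule exI[of _ 1]; simp)
    apply (rule exI[of _ 0]; simp)
    done
  then obtain e where "int (cpos k S x) - int (cpos k S y) = int x - int y + e * int (k+1)" by blast
  then show ?thesis by simp
qed

lemma kideal_add:
  assumes "y \<in> kideal k" "x \<in> kideal k"
  shows "(\<lambda>w. x w + y w) \<in> kideal k"
  using assms(1)
proof (induction y rule: kideal.induct)
  case zero
  then show ?case using assms(2) by simp
next
  case (step y p q u v c)
  have "(\<lambda>w. (x w + y w) + c * (wmono (u @ p @ v) w - wmono (u @ q @ v) w)) \<in> kideal k"
    using kideal.step[OF step.IH step.hyps(2-4)] by simp
  then show ?case by (simp add: algebra_simps)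
qed

lemma sv_refl: "same_value k u u"
  unfolding same_value_def using kideal.zero by simp

lemma sv_trans:
  assumes "same_value k a b" "same_value k b c"
  shows "same_value k a c"
proof -
  have "(\<lambda>w. (wmono a w - wmono b w) + (wmono b w - wmono c w)) \<in> kideal k"
    using kideal_add[OF assms(2)[unfolded same_value_def] assms(1)[unfolded same_value_def]] by simp
  then show ?thesis unfolding same_value_def by simp
qed

lemma sv_swap:
  assumes "([x, c], [c, x]) \<in> krels k" "set X \<subseteq> {0..k}" "set Y \<subseteq> {0..k}"
  shows "same_value k (X @ [x, c] @ Y) (X @ [c, x] @ Y)"
proof -
  have "(\<lambda>w. 0 + 1 * (wmono (X @ [x, c] @ Y) w - wmono (X @ [c, x] @ Y) w)) \<in> kideal k"
    using kideal.step[OF kideal.zero assms, where c=1] by simp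
  then show ?thesis unfolding same_value_def by simp
qed

lemma sv_move:
  assumes "\<forall>x\<in>set M. ([x, c], [c, x]) \<in> krels k" "set (X @ M @ Y) \<subseteq> {0..k}"
  shows "same_value k (X @ M @ [c] @ Y) (X @ [c] @ M @ Y)"
  using assms
proof (induction M arbitrary: X)
  case Nil
  then show ?case using sv_refl by simp
next
  case (Cons x M)
  have 1: "same_value k ((X @ [x]) @ M @ [c] @ Y) ((X @ [x]) @ [c] @ M @ Y)"
    using Cons.IH[of "X @ [x]"] Cons.prems by simp
  have 2: "same_value k (X @ [x, c] @ (M @ Y)) (X @ [c, x] @ (M @ Y))"
    using sv_swap[of x c k X "M @ Y"] Cons.prems by simp
  have e: "(X @ [x]) @ [c] @ M @ Y = X @ [x, c] @ (M @ Y)" by simp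
  show ?case using sv_trans[OF 1[unfolded e] 2] by simp
qed

lemma set_dep:
  assumes "set u = set v"
  shows "gap_tops k u = gap_tops k v" "umin k u = umin k v" "kconnected k u = kconnected k v"
  using assms unfolding gap_tops_def umin_def kconnected_def by simp_all

lemma neg_mod:
  fixes d n :: int
  assumes "0 < - d" "- d < n"
  shows "d mod n = d + n"
proof -
  have "d mod n = (d + n) mod n" by simp
  also have "\<dots> = d + n" using assms by (intro mod_pos_pos_trivial) auto
  finally show ?thesis .
qed

lemma mod_shift:
  fixes a c n :: int
  shows "(a - c) mod n = (-1) mod n \<longleftrightarrow> a mod n = (c - 1) mod n"
  by (simp add: mod_eq_dvd_iff algebra_simps)

lemma gap_nonempty:
  assumes S: "set u \<subset> {0..k}" and nc: "\<not> kconnected k u"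
  shows "gap_tops k u \<noteq> {}"
proof -
  define p where "p = cpos k (set u)"
  define n where "n = int (k+1)"
  have le: "\<And>z. z \<in> set u \<Longrightarrow> z \<le> k" using S by auto
  have inj: "\<And>x y. x \<le> k \<Longrightarrow> y \<le> k \<Longrightarrow> p x = p y \<Longrightarrow> x = y"
    using cpos_inj[OF S] p_def by blast
  obtain x y c0 where xy: "x \<in> set u" "y \<in> set u" "c0 \<le> k" "p x \<le> p c0" "p c0 \<le> p y" "c0 \<notin> set u"
    using nc unfolding kconnected_def p_def by blast
  have "p x \<noteq> p c0" using inj[of x c0] xy le by auto
  then have xc0: "p x < p c0" using xy by simp
  have "p y \<noteq> p c0" using inj[of y c0] xy le by auto
  then have yc0: "p c0 < p y" using xy by simp
  define L where "L = {z \<in> set u. p z < p c0}"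
  define H where "H = {z \<in> set u. p c0 < p z}"
  have fL: "finite (p ` L)" "p ` L \<noteq> {}" using xy xc0 unfolding L_def by auto
  have fH: "finite (p ` H)" "p ` H \<noteq> {}" using xy yc0 unfolding H_def by auto
  obtain a where a: "a \<in> L" "p a = Max (p ` L)" using Max_in[OF fL] by auto
  obtain c where c: "c \<in> H" "p c = Min (p ` H)" using Min_in[OF fH] by auto
  have amax: "\<And>z. z \<in> L \<Longrightarrow> p z \<le> p a" using a fL by simp
  have cmin: "\<And>z. z \<in> H \<Longrightarrow> p c \<le> p z" using c fH by simp
  have aS: "a \<in> set u" "p a < p c0" using a unfolding L_def by auto
  have cS: "c \<in> set u" "p c0 < p c" using c unfolding H_def by auto
  have pck: "p c < k" using cpos_lt_k[OF S cS(1)] p_def by simp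
  have nb: "\<not> (\<exists>b\<in>set u. p a < p b \<and> p b < p c)"
  proof
    assume "\<exists>b\<in>set u. p a < p b \<and> p b < p c"
    then obtain b where b: "b \<in> set u" "p a < p b" "p b < p c" by blast
    show False
    proof (cases "p b < p c0")
      case True then show False using amax[of b] b unfolding L_def by auto
    next
      case False
      show False
      proof (cases "p b = p c0")
        case True then show False using inj[of b c0] b xy le by auto
      next
        case False
        then have "b \<in> H" using \<open>\<not> p b < p c0\<close> b unfolding H_def by auto
        then show False using cmin[of b] b by auto
      qed
    qed
  qed
  have cong: "int a mod n \<noteq> (int c - 1) mod n"
  proof
    assume "int a mod n = (int c - 1) mod n"
    then have "(int a - int c) mod n = (-1) mod n" using mod_shift by blast
    then have e: "(int (p a) - int (p c)) mod n = (-1) mod n"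
      using cpos_cong[OF S le[OF aS(1)] le[OF cS(1)]] unfolding p_def n_def by simp
    have "(int (p a) - int (p c)) mod n = int (p a) - int (p c) + n"
      using aS cS pck by (intro neg_mod) (auto simp: n_def)
    moreover have "(-1) mod n = -1 + n"
      using aS cS pck by (intro neg_mod) (auto simp: n_def)
    ultimately show False using e aS cS by auto
  qed
  have "c \<in> gap_tops k u"
    unfolding gap_tops_def clt_def using cS aS nb cong
    unfolding p_def[symmetric] n_def[symmetric] using \<open>p a < p c0\<close> \<open>p c0 < p c\<close>
    by (intro CollectI conjI bexI[of _ a]) auto
  then show ?thesis by auto
qed

lemma umin_gap:
  assumes S: "set u \<subset> {0..k}" and nc: "\<not> kconnected k u"
  shows "umin k u \<in> gap_tops k u"
proof -
  define p where "p = cpos k (set u)"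
  define G where "G = gap_tops k u"
  have GS: "G \<subseteq> set u" unfolding G_def gap_tops_def by auto
  have fG: "finite (p ` G)" "p ` G \<noteq> {}" using GS gap_nonempty[OF S nc] G_def
    by (auto intro: finite_subset)
  obtain c where c: "c \<in> G" "p c = Min (p ` G)" using Min_in[OF fG] by auto
  have cmin: "\<forall>c'\<in>G. p c \<le> p c'" using c fG by simp
  have "umin k u = c"
    unfolding umin_def G_def[symmetric] p_def[symmetric]
  proof (rule the_equality)
    show "c \<in> G \<and> (\<forall>c'\<in>G. p c \<le> p c')" using c cmin by simp
  next
    fix c' assume h: "c' \<in> G \<and> (\<forall>c''\<in>G. p c' \<le> p c'')"
    then have "p c' = p c" using c cmin by (meson le_antisym)
    moreover have "c' \<le> k" "c \<le> k" using h c GS S by auto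
    ultimately show "c' = c" using cpos_inj[OF S] p_def by blast
  qed
  then show ?thesis using c G_def by simp
qed

lemma umin_facts:
  assumes S: "set u \<subset> {0..k}" and nc: "\<not> kconnected k u"
  shows "umin k u \<in> set u"
    "\<exists>a\<in>set u. clt k (set u) a (umin k u)"
    "\<And>x. x \<in> set u \<Longrightarrow> clt k (set u) x (umin k u) \<Longrightarrow> ([x, umin k u], [umin k u, x]) \<in> krels k"
proof -
  define p where "p = cpos k (set u)"
  define n where "n = int (k+1)"
  define c where "c = umin k u"
  have le: "\<And>z. z \<in> set u \<Longrightarrow> z \<le> k" using S by auto
  have inj: "\<And>x y. x \<le> k \<Longrightarrow> y \<le> k \<Longrightarrow> p x = p y \<Longrightarrow> x = y"
    using cpos_inj[OF S] p_def by blast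
  have g: "c \<in> gap_tops k u" using umin_gap[OF S nc] c_def by simp
  then obtain a where a: "c \<in> set u" "a \<in> set u" "p a < p c" "int a mod n \<noteq> (int c - 1) mod n"
    "\<not> (\<exists>b\<in>set u. p a < p b \<and> p b < p c)"
    unfolding gap_tops_def clt_def p_def n_def by auto
  show "umin k u \<in> set u" using a c_def by simp
  show "\<exists>a\<in>set u. clt k (set u) a (umin k u)" using a c_def p_def clt_def by auto
  fix x assume x: "x \<in> set u" "clt k (set u) x (umin k u)"
  then have px: "p x < p c" using c_def p_def clt_def by simp
  have pck: "p c < k" using cpos_lt_k[OF S a(1)] p_def by simp
  have cg: "(int x - int c) mod n = (int (p x) - int (p c)) mod n"
    using cpos_cong[OF S le[OF x(1)] le[OF a(1)]] p_def n_def by simp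
  have dm: "(int (p x) - int (p c)) mod n = int (p x) - int (p c) + n"
    using px pck by (intro neg_mod) (auto simp: n_def)
  have m1: "(-1) mod n = -1 + n" using px pck by (intro neg_mod) (auto simp: n_def)
  have one: "1 mod n = 1" using px pck by (auto simp: n_def)
  have ne1: "(int x - int c) mod n \<noteq> 1 mod n" using cg dm one px pck n_def by auto
  have ne2: "(int x - int c) mod n \<noteq> (-1) mod n"
  proof
    assume h: "(int x - int c) mod n = (-1) mod n"
    then have pxc: "p x + 1 = p c" using cg dm m1 px by auto
    have "x \<noteq> a" using h a(4) mod_shift by blast
    then have "p x \<noteq> p a" using inj le x(1) a(2) by blast
    moreover have "p a \<noteq> p x"
      using calculation by simp
    then have "p a < p x" using pxc a(3) by auto
    then show False using a(5) x(1) px by blast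
  qed
  show "([x, umin k u], [umin k u, x]) \<in> krels k"
    unfolding krels_def using ne1 ne2 le[OF x(1)] le[OF a(1)] c_def n_def by blast
qed


definition botw :: "hooktype \<Rightarrow> nat \<Rightarrow> nat list" where
  "botw X b = (case X of U \<Rightarrow> [b,b] | V \<Rightarrow> [b])"

definition dlt :: "hooktype \<Rightarrow> nat" where
  "dlt X = (case X of U \<Rightarrow> 2 | V \<Rightarrow> 1)"

lemma transp_clt: "transp (clt k S)" "transp (\<lambda>x y. clt k S y x)"
  unfolding transp_def clt_def by auto

lemma hookV_decomp:
  assumes "hookV k u j"
  shows "\<exists>D b I. u = D @ [b] @ I \<and> length D = j \<and> sorted_wrt (\<lambda>x y. clt k (set u) y x) (D @ [b])
     \<and> sorted_wrt (clt k (set u)) (b # I)"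
proof -
  have j: "j < length u" using assms unfolding hookV_def by simp
  have 1: "u = take j u @ [u!j] @ drop (Suc j) u" using id_take_nth_drop[OF j] by simp
  have 2: "take j u @ [u!j] = take (Suc j) u" using take_Suc_conv_app_nth[OF j] by simp
  have 3: "u!j # drop (Suc j) u = drop j u" using Cons_nth_drop_Suc[OF j] by simp
  have s1: "sorted_wrt (\<lambda>x y. clt k (set u) y x) (take (Suc j) u)"
    unfolding sorted_wrt_iff_nth_Suc_transp[OF transp_clt(2)]
    using assms unfolding hookV_def by auto
  have s2: "sorted_wrt (clt k (set u)) (drop j u)"
    unfolding sorted_wrt_iff_nth_Suc_transp[OF transp_clt(1)]
  proof (intro allI impI)
    fix i assume "Suc i < length (drop j u)"
    then show "clt k (set u) (drop j u ! i) (drop j u ! Suc i)"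
      using assms unfolding hookV_def by (auto dest: spec[of _ "j + i"])
  qed
  show ?thesis using 1 2 3 s1 s2 j by (intro exI[of _ "take j u"] exI[of _ "u!j"] exI[of _ "drop (Suc j) u"]) auto
qed

lemma hookU_decomp:
  assumes "hookU k u j"
  shows "\<exists>D b I. u = D @ [b, b] @ I \<and> length D = j \<and> sorted_wrt (\<lambda>x y. clt k (set u) y x) (D @ [b])
     \<and> sorted_wrt (clt k (set u)) (b # I)"
proof -
  have j: "Suc j < length u" "u ! j = u ! Suc j" using assms unfolding hookU_def by auto
  have j': "j < length u" using j by simp
  have 1: "u = take j u @ [u!j] @ drop (Suc j) u" using id_take_nth_drop[OF j'] by simp
  have h1a: "drop (Suc j) u = u ! Suc j # drop (Suc (Suc j)) u" using Cons_nth_drop_Suc[OF j(1)] by simp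
  have 2: "take j u @ [u!j] = take (Suc j) u" using take_Suc_conv_app_nth[OF j'] by simp
  have s1: "sorted_wrt (\<lambda>x y. clt k (set u) y x) (take (Suc j) u)"
    unfolding sorted_wrt_iff_nth_Suc_transp[OF transp_clt(2)]
    using assms unfolding hookU_def by auto
  have s2: "sorted_wrt (clt k (set u)) (drop (Suc j) u)"
    unfolding sorted_wrt_iff_nth_Suc_transp[OF transp_clt(1)]
  proof (intro allI impI)
    fix i assume "Suc i < length (drop (Suc j) u)"
    then show "clt k (set u) (drop (Suc j) u ! i) (drop (Suc j) u ! Suc i)"
      using assms unfolding hookU_def by (auto dest: spec[of _ "Suc j + i"])
  qed
  show ?thesis using 1 h1a 2 s1 s2 j
    by (intro exI[of _ "take j u"] exI[of _ "u!j"] exI[of _ "drop (Suc (Suc j)) u"]) auto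
qed

lemma hook_decomp:
  assumes "hook X k u j"
  shows "\<exists>D b I. u = D @ botw X b @ I \<and> length D = j \<and> sorted_wrt (\<lambda>x y. clt k (set u) y x) (D @ [b])
     \<and> sorted_wrt (clt k (set u)) (b # I)"
  using assms hookV_decomp hookU_decomp unfolding hook_def botw_def
  by (cases X) auto

lemma decomp_hookV:
  assumes u: "u = D @ [b] @ I" and s1: "sorted_wrt (\<lambda>x y. clt k (set u) y x) (D @ [b])"
    and s2: "sorted_wrt (clt k (set u)) (b # I)"
  shows "hookV k u (length D)"
  unfolding hookV_def
proof (intro conjI allI impI)
  show "length D < length u" using u by simp
next
  fix t assume t: "t < length D"
  have "u ! t = (D @ [b]) ! t" "u ! (t+1) = (D @ [b]) ! (t+1)" using u t by (auto simp: nth_append)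
  then show "clt k (set u) (u ! (t + 1)) (u ! t)"
    using sorted_wrt_nth_less[OF s1, of t "t+1"] t by simp
next
  fix t assume t: "length D \<le> t \<and> t + 1 < length u"
  then obtain i where i: "t = length D + i" using le_Suc_ex by blast
  have "u ! t = (b # I) ! i" "u ! (t+1) = (b # I) ! (Suc i)"
    using u i by (auto simp: nth_append)
  moreover have "Suc i < length (b # I)" using t u i by simp
  ultimately show "clt k (set u) (u ! t) (u ! (t + 1))"
    using sorted_wrt_nth_less[OF s2, of i "Suc i"] by simp
qed

lemma decomp_hookU:
  assumes u: "u = D @ [b, b] @ I" and s1: "sorted_wrt (\<lambda>x y. clt k (set u) y x) (D @ [b])"
    and s2: "sorted_wrt (clt k (set u)) (b # I)"
  shows "hookU k u (length D)"
  unfolding hookU_def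
proof (intro conjI allI impI)
  show "length D + 1 < length u" using u by simp
  show "u ! length D = u ! (length D + 1)" using u by (simp add: nth_append)
next
  fix t assume t: "t < length D"
  have "u ! t = (D @ [b]) ! t" "u ! (t+1) = (D @ [b]) ! (t+1)" using u t by (auto simp: nth_append)
  then show "clt k (set u) (u ! (t + 1)) (u ! t)"
    using sorted_wrt_nth_less[OF s1, of t "t+1"] t by simp
next
  fix t assume t: "length D + 1 \<le> t \<and> t + 1 < length u"
  then obtain i where i: "t = length D + 1 + i" using le_Suc_ex by blast
  have "u ! t = (b # I) ! i" "u ! (t+1) = (b # I) ! (Suc i)"
    using u i by (auto simp: nth_append)
  moreover have "Suc i < length (b # I)" using t u i by simp
  ultimately show "clt k (set u) (u ! t) (u ! (t + 1))"
    using sorted_wrt_nth_less[OF s2, of i "Suc i"] by simp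
qed

lemma decomp_hook:
  assumes u: "u = D @ botw X b @ I" and s1: "sorted_wrt (\<lambda>x y. clt k (set u) y x) (D @ [b])"
    and s2: "sorted_wrt (clt k (set u)) (b # I)"
  shows "hook X k u (length D)"
  using assms decomp_hookV decomp_hookU unfolding hook_def botw_def
  by (cases X) auto

lemma asc_hook:
  assumes "hook X k u j"
  shows "asc k u + j + dlt X = length u"
proof (cases X)
  case U
  then have h: "hookU k u j" using assms hook_def by simp
  have "{t. t + 1 < length u \<and> clt k (set u) (u ! t) (u ! (t+1))} = {j+1..<length u - 1}"
  proof (intro set_eqI iffI)
    fix t assume t: "t \<in> {t. t + 1 < length u \<and> clt k (set u) (u ! t) (u ! (t+1))}"
    have "\<not> t < j" using t h unfolding hookU_def clt_def by (auto dest: spec[of _ t])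
    moreover have "t \<noteq> j" using t h unfolding hookU_def clt_def by auto
    ultimately show "t \<in> {j+1..<length u - 1}" using t by auto
  next
    fix t assume "t \<in> {j+1..<length u - 1}"
    then show "t \<in> {t. t + 1 < length u \<and> clt k (set u) (u ! t) (u ! (t+1))}"
      using h unfolding hookU_def by auto
  qed
  then have "asc k u = length u - 1 - (j+1)" unfolding asc_def by simp
  moreover have "j + 1 < length u" using h unfolding hookU_def by simp
  ultimately show ?thesis using U unfolding dlt_def by simp
next
  case V
  then have h: "hookV k u j" using assms hook_def by simp
  have "{t. t + 1 < length u \<and> clt k (set u) (u ! t) (u ! (t+1))} = {j..<length u - 1}"
  proof (intro set_eqI iffI)
    fix t assume t: "t \<in> {t. t + 1 < length u \<and> clt k (set u) (u ! t) (u ! (t+1))}"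
    have "\<not> t < j" using t h unfolding hookV_def clt_def by (auto dest: spec[of _ t])
    then show "t \<in> {j..<length u - 1}" using t by auto
  next
    fix t assume "t \<in> {j..<length u - 1}"
    then show "t \<in> {t. t + 1 < length u \<and> clt k (set u) (u ! t) (u ! (t+1))}"
      using h unfolding hookV_def by auto
  qed
  then have "asc k u = length u - 1 - j" unfolding asc_def by simp
  moreover have "j < length u" using h unfolding hookV_def by simp
  ultimately show ?thesis using V unfolding dlt_def by simp
qed


definition core :: "nat \<Rightarrow> nat set \<Rightarrow> nat list \<Rightarrow> nat list \<Rightarrow> nat \<Rightarrow> nat list \<Rightarrow> nat list \<Rightarrow> nat \<Rightarrow> bool" where
  "core k S D1 D2 b I1 I2 c \<longleftrightarrow> sorted_wrt (\<lambda>x y. clt k S y x) (D1 @ D2 @ [b])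
    \<and> sorted_wrt (clt k S) (b # I1 @ I2) \<and> (\<forall>x\<in>set D1. clt k S c x) \<and> (\<forall>x\<in>set D2. clt k S x c)
    \<and> clt k S b c \<and> (\<forall>x\<in>set I1. clt k S x c) \<and> (\<forall>x\<in>set I2. clt k S c x)"

definition wL :: "hooktype \<Rightarrow> nat list \<Rightarrow> nat list \<Rightarrow> nat \<Rightarrow> nat list \<Rightarrow> nat list \<Rightarrow> nat \<Rightarrow> nat list" where
  "wL X D1 D2 b I1 I2 c = D1 @ c # D2 @ botw X b @ I1 @ I2"

definition wR :: "hooktype \<Rightarrow> nat list \<Rightarrow> nat list \<Rightarrow> nat \<Rightarrow> nat list \<Rightarrow> nat list \<Rightarrow> nat \<Rightarrow> nat list" where
  "wR X D1 D2 b I1 I2 c = D1 @ D2 @ botw X b @ I1 @ c # I2"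

lemma set_botw[simp]: "set (botw X b) = {b}" unfolding botw_def by (cases X) auto
lemma count_botw[simp]: "count_list (botw X b) x = (if x = b then dlt X else 0)"
  unfolding botw_def dlt_def by (cases X) auto
lemma length_botw[simp]: "length (botw X b) = dlt X" unfolding botw_def dlt_def by (cases X) auto

lemma wLR_basic:
  "set (wL X D1 D2 b I1 I2 c) = set (wR X D1 D2 b I1 I2 c)"
  "length (wL X D1 D2 b I1 I2 c) = length (wR X D1 D2 b I1 I2 c)"
  "count_list (wL X D1 D2 b I1 I2 c) x = count_list (wR X D1 D2 b I1 I2 c) x"
  unfolding wL_def wR_def by auto

lemma core_notc:
  assumes "core k S D1 D2 b I1 I2 c"
  shows "c \<notin> set D1" "c \<notin> set D2" "c \<noteq> b" "c \<notin> set I1" "c \<notin> set I2"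
  using assms unfolding core_def clt_def by auto

lemma core_hooks:
  assumes co: "core k S D1 D2 b I1 I2 c" and S: "S = set (wR X D1 D2 b I1 I2 c)"
  shows "hook X k (wL X D1 D2 b I1 I2 c) (length D1 + 1 + length D2)"
        "hook X k (wR X D1 D2 b I1 I2 c) (length D1 + length D2)"
proof -
  have S1: "set (wL X D1 D2 b I1 I2 c) = S" using S wLR_basic by simp
  have a: "sorted_wrt (\<lambda>x y. clt k S y x) ((D1 @ c # D2) @ [b])"
    using co unfolding core_def clt_def by (auto simp: sorted_wrt_append)
  have b: "sorted_wrt (clt k S) (b # I1 @ I2)" using co unfolding core_def by simp
  have "hook X k (wL X D1 D2 b I1 I2 c) (length (D1 @ c # D2))"
    by (rule decomp_hook[where I="I1 @ I2"]) (use a b S1 in \<open>auto simp: wL_def\<close>)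
  then show "hook X k (wL X D1 D2 b I1 I2 c) (length D1 + 1 + length D2)" by simp
  have a2: "sorted_wrt (\<lambda>x y. clt k S y x) ((D1 @ D2) @ [b])"
    using co unfolding core_def by simp
  have b2: "sorted_wrt (clt k S) (b # I1 @ c # I2)" using co unfolding core_def clt_def
    by (auto simp: sorted_wrt_append)
  have "hook X k (wR X D1 D2 b I1 I2 c) (length (D1 @ D2))"
    by (rule decomp_hook[where I="I1 @ c # I2"]) (use a2 b2 S in \<open>auto simp: wR_def\<close>)
  then show "hook X k (wR X D1 D2 b I1 I2 c) (length D1 + length D2)" by simp
qed

lemma core_asc:
  assumes co: "core k S D1 D2 b I1 I2 c" and S: "S = set (wR X D1 D2 b I1 I2 c)"
  shows "asc k (wL X D1 D2 b I1 I2 c) + 1 = asc k (wR X D1 D2 b I1 I2 c)"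
  using asc_hook[OF core_hooks(1)[OF co S]] asc_hook[OF core_hooks(2)[OF co S]] wLR_basic(2)[of X D1 D2 b I1 I2 c]
  by simp

definition splitw :: "nat \<Rightarrow> nat set \<Rightarrow> nat \<Rightarrow> nat list \<Rightarrow> nat list \<times> nat list \<times> nat list" where
  "splitw k S c u = (let w = removeAll c u; R = dropWhile (\<lambda>x. clt k S c x) w in
     (takeWhile (\<lambda>x. clt k S c x) w, takeWhile (\<lambda>x. clt k S x c) R, dropWhile (\<lambda>x. clt k S x c) R))"

definition toL :: "nat \<Rightarrow> nat \<Rightarrow> nat list \<Rightarrow> nat list" where
  "toL k c u = (case splitw k (set u) c u of (A, B, C) \<Rightarrow> A @ c # B @ C)"

definition toR :: "nat \<Rightarrow> nat \<Rightarrow> nat list \<Rightarrow> nat list" where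
  "toR k c u = (case splitw k (set u) c u of (A, B, C) \<Rightarrow> A @ B @ c # C)"

lemma splitw_core:
  assumes co: "core k S D1 D2 b I1 I2 c"
  shows "splitw k S c (wL X D1 D2 b I1 I2 c) = (D1, D2 @ botw X b @ I1, I2)"
        "splitw k S c (wR X D1 D2 b I1 I2 c) = (D1, D2 @ botw X b @ I1, I2)"
proof -
  note nc = core_notc[OF co]
  have r1: "removeAll c (wL X D1 D2 b I1 I2 c) = D1 @ (D2 @ botw X b @ I1) @ I2"
    using nc unfolding wL_def by simp
  have r2: "removeAll c (wR X D1 D2 b I1 I2 c) = D1 @ (D2 @ botw X b @ I1) @ I2"
    using nc unfolding wR_def by simp
  have hd: "hd ((D2 @ botw X b @ I1) @ I2) \<in> set (D2 @ [b])"
    by (cases D2; cases X) (auto simp: botw_def)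
  have ne: "(D2 @ botw X b @ I1) @ I2 \<noteq> []" by (cases X) (auto simp: botw_def)
  have Mlt: "\<forall>x\<in>set (D2 @ botw X b @ I1). clt k S x c" using co unfolding core_def by auto
  have hdlt: "clt k S (hd ((D2 @ botw X b @ I1) @ I2)) c" using hd co unfolding core_def by auto
  have t1: "takeWhile (\<lambda>x. clt k S c x) (D1 @ (D2 @ botw X b @ I1) @ I2) = D1"
    using co hdlt ne unfolding core_def clt_def by (auto simp: takeWhile_eq_Nil_iff)
  have d1: "dropWhile (\<lambda>x. clt k S c x) (D1 @ (D2 @ botw X b @ I1) @ I2) = (D2 @ botw X b @ I1) @ I2"
    using co hdlt ne unfolding core_def clt_def by (auto simp: dropWhile_eq_self_iff)
  have t2: "takeWhile (\<lambda>x. clt k S x c) ((D2 @ botw X b @ I1) @ I2) = D2 @ botw X b @ I1"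
  proof -
    have "takeWhile (\<lambda>x. clt k S x c) I2 = []" using co by (cases I2) (auto simp: core_def clt_def)
    moreover have "takeWhile (\<lambda>x. clt k S x c) ((D2 @ botw X b @ I1) @ I2) = (D2 @ botw X b @ I1) @ takeWhile (\<lambda>x. clt k S x c) I2"
      by (rule takeWhile_append2) (use Mlt in auto)
    ultimately show ?thesis by simp
  qed
  have d2: "dropWhile (\<lambda>x. clt k S x c) ((D2 @ botw X b @ I1) @ I2) = I2"
    using co Mlt unfolding core_def clt_def
    by (subst dropWhile_append2) (auto intro!: dropWhile_id)
  show "splitw k S c (wL X D1 D2 b I1 I2 c) = (D1, D2 @ botw X b @ I1, I2)"
    unfolding splitw_def Let_def r1 t1 d1 t2 d2 by simp
  show "splitw k S c (wR X D1 D2 b I1 I2 c) = (D1, D2 @ botw X b @ I1, I2)"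
    unfolding splitw_def Let_def r2 t1 d1 t2 d2 by simp
qed

lemma toLR_core:
  assumes co: "core k S D1 D2 b I1 I2 c" and S: "S = set (wR X D1 D2 b I1 I2 c)"
  shows "toL k c (wR X D1 D2 b I1 I2 c) = wL X D1 D2 b I1 I2 c"
        "toR k c (wL X D1 D2 b I1 I2 c) = wR X D1 D2 b I1 I2 c"
proof -
  have S1: "set (wL X D1 D2 b I1 I2 c) = S" using S wLR_basic by simp
  show "toL k c (wR X D1 D2 b I1 I2 c) = wL X D1 D2 b I1 I2 c"
    unfolding toL_def S[symmetric] splitw_core[OF co] by (simp add: wL_def)
  show "toR k c (wL X D1 D2 b I1 I2 c) = wR X D1 D2 b I1 I2 c"
    unfolding toR_def S1 splitw_core[OF co] by (simp add: wR_def)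
qed


lemma sorted_distinct: "sorted_wrt R xs \<Longrightarrow> (\<And>x. \<not> R x x) \<Longrightarrow> distinct xs"
  by (induction xs) auto

lemma cnt_distinct: "distinct xs \<Longrightarrow> count_list xs x = (if x \<in> set xs then 1 else 0)"
  by (induction xs) auto

lemma base:
  assumes S: "set u \<subset> {0..k}" and nc: "\<not> kconnected k u" and u: "u = D @ botw X b @ I"
    and s1: "sorted_wrt (\<lambda>x y. clt k (set u) y x) (D @ [b])" and s2: "sorted_wrt (clt k (set u)) (b # I)"
  shows "umin k u \<in> set u" "clt k (set u) b (umin k u)" "umin k u \<noteq> b"
    "umin k u \<in> set D \<or> umin k u \<in> set I"
    "count_list u (umin k u) = (if umin k u \<in> set D then 1 else 0) + (if umin k u \<in> set I then 1 else 0)"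
    "\<forall>x\<in>set u. x \<noteq> b \<longrightarrow> clt k (set u) b x"
proof -
  have dD: "distinct D" using sorted_distinct[of _ "D @ [b]"] s1 unfolding clt_def by auto
  have dI: "distinct I" using sorted_distinct[of _ "b # I"] s2 unfolding clt_def by auto
  have mD: "\<forall>x\<in>set D. clt k (set u) b x" using s1 by (simp add: sorted_wrt_append)
  have mI: "\<forall>x\<in>set I. clt k (set u) b x" using s2 by simp
  show mn: "\<forall>x\<in>set u. x \<noteq> b \<longrightarrow> clt k (set u) b x" using mD mI u by auto
  note uf = umin_facts[OF S nc]
  show cu: "umin k u \<in> set u" using uf by simp
  obtain a where a: "a \<in> set u" "clt k (set u) a (umin k u)" using uf by blast
  show bc: "clt k (set u) b (umin k u)"
  proof (cases "a = b")
    case True then show ?thesis using a by simp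
  next
    case False then show ?thesis using mn a unfolding clt_def by force
  qed
  then show cb: "umin k u \<noteq> b" unfolding clt_def by auto
  show "umin k u \<in> set D \<or> umin k u \<in> set I" using cu cb u by auto
  show "count_list u (umin k u) = (if umin k u \<in> set D then 1 else 0) + (if umin k u \<in> set I then 1 else 0)"
    using u cb cnt_distinct[OF dD] cnt_distinct[OF dI] by simp
qed

lemma pos_left:
  assumes "u = D @ botw X b @ I" "t \<le> length D" "u ! t = c" "c \<noteq> b"
  shows "c \<in> set D"
proof -
  have "t \<noteq> length D" using assms by (cases X) (auto simp: botw_def nth_append)
  then have "t < length D" using assms by simp
  then show ?thesis using assms by (auto simp: nth_append)
qed

lemma pos_right:
  assumes "u = D @ botw X b @ I" "length D \<le> t" "t < length u" "u ! t = c" "c \<noteq> b"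
  shows "c \<in> set I"
proof -
  have "u ! t = (botw X b @ I) ! (t - length D)" using assms by (simp add: nth_append)
  moreover have "t - length D < length (botw X b @ I)" using assms by simp
  ultimately have "c \<in> set (botw X b @ I)" using assms(4) nth_mem by metis
  then show ?thesis using assms by simp
qed

lemma tw_bot: "b \<notin> set D \<Longrightarrow> takeWhile (\<lambda>x. x \<noteq> b) (D @ botw X b @ I) = D"
proof -
  assume "b \<notin> set D"
  then have "takeWhile (\<lambda>x. x \<noteq> b) (D @ botw X b @ I) = D @ takeWhile (\<lambda>x. x \<noteq> b) (botw X b @ I)"
    by (intro takeWhile_append2) auto
  then show ?thesis by (cases X) (auto simp: botw_def)
qed

lemma dw_below:
  fixes p :: "nat \<Rightarrow> nat"
  assumes "sorted_wrt (\<lambda>x y. p y < p x) xs" "\<forall>x\<in>set xs. p x \<noteq> p c" "x \<in> set (dropWhile (\<lambda>x. p c < p x) xs)"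
  shows "p x < p c"
  using assms
proof (induction xs)
  case Nil then show ?case by simp
next
  case (Cons a xs)
  show ?case
  proof (cases "p c < p a")
    case True then show ?thesis using Cons by simp
  next
    case False
    then have "p a < p c" using Cons.prems by force
    then show ?thesis using Cons.prems False by auto
  qed
qed

lemma dw_above:
  fixes p :: "nat \<Rightarrow> nat"
  assumes "sorted_wrt (\<lambda>x y. p x < p y) xs" "\<forall>x\<in>set xs. p x \<noteq> p c" "x \<in> set (dropWhile (\<lambda>x. p x < p c) xs)"
  shows "p c < p x"
  using assms
proof (induction xs)
  case Nil then show ?case by simp
next
  case (Cons a xs)
  show ?case
  proof (cases "p a < p c")
    case True then show ?thesis using Cons by simp
  next
    case False
    then have "p c < p a" using Cons.prems by force
    then show ?thesis using Cons.prems False by auto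
  qed
qed

lemma extractR:
  assumes u: "u \<in> Xright X k r i"
  shows "\<exists>D1 D2 b I1 I2. u = wR X D1 D2 b I1 I2 (umin k u) \<and> core k (set u) D1 D2 b I1 I2 (umin k u)"
proof -
  define c where "c = umin k u"
  define p where "p = cpos k (set u)"
  have S: "set u \<subset> {0..k}" and nwc: "\<not> kweak_connected k u" and cnt: "count_list u c = 1"
    using u unfolding Xright_def Xset_def weak_hook_word_def c_def by auto
  have nc: "\<not> kconnected k u" using nwc kweak_connected_def by auto
  obtain j t where jt: "hook X k u j" "t < length u" "u ! t = c" "on_right X j t"
    using u unfolding Xright_def c_def by auto
  obtain D b I where d: "u = D @ botw X b @ I" "length D = j" "sorted_wrt (\<lambda>x y. clt k (set u) y x) (D @ [b])"
     "sorted_wrt (clt k (set u)) (b # I)" using hook_decomp[OF jt(1)] by blast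
  note bs = base[OF S nc d(1) d(3) d(4), folded c_def]
  have "j \<le> t" using jt(4) unfolding on_right_def by (cases X) auto
  then have cI: "c \<in> set I" using pos_right[OF d(1) _ jt(2) jt(3) bs(3)] d(2) by simp
  then have cD: "c \<notin> set D" using bs(5) cnt by auto
  obtain I1 I2 where I: "I = I1 @ c # I2" using split_list[OF cI] by blast
  define D1 where "D1 = takeWhile (\<lambda>x. clt k (set u) c x) D"
  define D2 where "D2 = dropWhile (\<lambda>x. clt k (set u) c x) D"
  have DD: "D = D1 @ D2" unfolding D1_def D2_def by simp
  have le: "\<And>x. x \<in> set u \<Longrightarrow> x \<le> k" using S by auto
  have neq: "\<forall>x\<in>set D. p x \<noteq> p c"
  proof
    fix x assume x: "x \<in> set D"
    then have "x \<noteq> c" using cD by auto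
    moreover have "x \<in> set u" "c \<in> set u" using x d(1) bs(1) by auto
    ultimately show "p x \<noteq> p c" using cpos_inj[OF S] le p_def by metis
  qed
  have sD: "sorted_wrt (\<lambda>x y. p y < p x) D" using d(3) unfolding p_def clt_def by (simp add: sorted_wrt_append)
  have D2lt: "\<forall>x\<in>set D2. clt k (set u) x c"
    using dw_below[OF sD neq] unfolding D2_def clt_def p_def by blast
  have D1gt: "\<forall>x\<in>set D1. clt k (set u) c x" unfolding D1_def using set_takeWhileD by fastforce
  have co: "core k (set u) D1 D2 b I1 I2 c"
    unfolding core_def
    using d(3) d(4) DD D2lt D1gt bs(2) I unfolding clt_def by (auto simp: sorted_wrt_append)
  have eq: "u = wR X D1 D2 b I1 I2 c" using d(1) DD I unfolding wR_def by simp
  show ?thesis unfolding c_def[symmetric]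
    by (rule exI[of _ D1], rule exI[of _ D2], rule exI[of _ b], rule exI[of _ I1], rule exI[of _ I2]) (rule conjI[OF eq co])
qed

lemma extractL:
  assumes u: "u \<in> Xleft X k r i"
  shows "\<exists>D1 D2 b I1 I2. u = wL X D1 D2 b I1 I2 (umin k u) \<and> core k (set u) D1 D2 b I1 I2 (umin k u)"
proof -
  define c where "c = umin k u"
  define p where "p = cpos k (set u)"
  have S: "set u \<subset> {0..k}" and nwc: "\<not> kweak_connected k u" and cnt: "count_list u c = 1"
    using u unfolding Xleft_def Xset_def weak_hook_word_def c_def by auto
  have nc: "\<not> kconnected k u" using nwc kweak_connected_def by auto
  obtain j t where jt: "hook X k u j" "t < length u" "u ! t = c" "on_left X j t"
    using u unfolding Xleft_def c_def by auto
  obtain D b I where d: "u = D @ botw X b @ I" "length D = j" "sorted_wrt (\<lambda>x y. clt k (set u) y x) (D @ [b])"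
     "sorted_wrt (clt k (set u)) (b # I)" using hook_decomp[OF jt(1)] by blast
  note bs = base[OF S nc d(1) d(3) d(4), folded c_def]
  have "t \<le> j" using jt(4) unfolding on_left_def by simp
  then have cD: "c \<in> set D" using pos_left[OF d(1) _ jt(3) bs(3)] d(2) by simp
  then have cI: "c \<notin> set I" using bs(5) cnt by auto
  obtain D1 D2 where D: "D = D1 @ c # D2" using split_list[OF cD] by blast
  define I1 where "I1 = takeWhile (\<lambda>x. clt k (set u) x c) I"
  define I2 where "I2 = dropWhile (\<lambda>x. clt k (set u) x c) I"
  have II: "I = I1 @ I2" unfolding I1_def I2_def by simp
  have le: "\<And>x. x \<in> set u \<Longrightarrow> x \<le> k" using S by auto
  have neq: "\<forall>x\<in>set I. p x \<noteq> p c"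
  proof
    fix x assume x: "x \<in> set I"
    then have "x \<noteq> c" using cI by auto
    moreover have "x \<in> set u" "c \<in> set u" using x d(1) bs(1) by auto
    ultimately show "p x \<noteq> p c" using cpos_inj[OF S] le p_def by metis
  qed
  have sI: "sorted_wrt (\<lambda>x y. p x < p y) I" using d(4) unfolding p_def clt_def by simp
  have I2gt: "\<forall>x\<in>set I2. clt k (set u) c x"
    using dw_above[OF sI neq] unfolding I2_def clt_def p_def by blast
  have I1lt: "\<forall>x\<in>set I1. clt k (set u) x c" unfolding I1_def using set_takeWhileD by fastforce
  have co: "core k (set u) D1 D2 b I1 I2 c"
    unfolding core_def
    using d(3) d(4) II I2gt I1lt bs(2) D unfolding clt_def by (auto simp: sorted_wrt_append)
  have eq: "u = wL X D1 D2 b I1 I2 c" using d(1) II D unfolding wL_def by simp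
  show ?thesis unfolding c_def[symmetric]
    by (rule exI[of _ D1], rule exI[of _ D2], rule exI[of _ b], rule exI[of _ I1], rule exI[of _ I2]) (rule conjI[OF eq co])
qed


lemma build:
  assumes co: "core k S D1 D2 b I1 I2 c" and Sd: "S = set (wR X D1 D2 b I1 I2 c)"
    and Sk: "S \<subset> {0..k}" and nc: "\<not> kconnected k (wR X D1 D2 b I1 I2 c)"
    and um: "umin k (wR X D1 D2 b I1 I2 c) = c" and cnt: "count_list (wR X D1 D2 b I1 I2 c) c = 1"
  shows "wL X D1 D2 b I1 I2 c \<in> Xleft X k (int (length (wL X D1 D2 b I1 I2 c))) (int (asc k (wL X D1 D2 b I1 I2 c)))"
    "wR X D1 D2 b I1 I2 c \<in> Xright X k (int (length (wR X D1 D2 b I1 I2 c))) (int (asc k (wR X D1 D2 b I1 I2 c)))"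
proof -
  define uL where "uL = wL X D1 D2 b I1 I2 c"
  define uR where "uR = wR X D1 D2 b I1 I2 c"
  have sL: "set uL = set uR" unfolding uL_def uR_def using wLR_basic by simp
  have umL: "umin k uL = c" using set_dep(2)[OF sL] um uR_def by simp
  have ncL: "\<not> kconnected k uL" using set_dep(3)[OF sL] nc uR_def by simp
  have cntL: "count_list uL c = 1" using wLR_basic(3) cnt uL_def uR_def by simp
  note hk = core_hooks[OF co Sd]
  have ltL: "length D1 < length uL" "uL ! length D1 = c" unfolding uL_def wL_def by (auto simp: nth_append)
  show "uL \<in> Xleft X k (int (length uL)) (int (asc k uL))"
  proof -
    have ex: "\<exists>j t. hook X k uL j \<and> t < length uL \<and> uL ! t = umin k uL \<and> on_left X j t"
      by (rule exI[of _ "length D1 + 1 + length D2"], rule exI[of _ "length D1"])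
        (use hk(1) ltL umL uL_def in \<open>auto simp: on_left_def\<close>)
    show ?thesis
      unfolding Xleft_def Xset_def weak_hook_word_def kweak_connected_def
      using sL Sd Sk uR_def hk(1) ncL cntL umL ex uL_def by auto
  qed
  define t where "t = length D1 + length D2 + dlt X + length I1"
  have ltR: "t < length uR" "uR ! t = c" unfolding uR_def wR_def t_def
    by (auto simp: nth_append)
  have onr: "on_right X (length D1 + length D2) t" unfolding on_right_def t_def dlt_def by (cases X) auto
  show "uR \<in> Xright X k (int (length uR)) (int (asc k uR))"
  proof -
    have ex: "\<exists>j t. hook X k uR j \<and> t < length uR \<and> uR ! t = umin k uR \<and> on_right X j t"
      by (rule exI[of _ "length D1 + length D2"], rule exI[of _ t])
        (use hk(2) ltR onr um uR_def in \<open>auto\<close>)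
    show ?thesis
      unfolding Xright_def Xset_def weak_hook_word_def kweak_connected_def
      using Sd Sk uR_def hk(2) nc cnt um ex by auto
  qed
qed

lemma cover:
  assumes u: "u \<in> Xset X k r i" and nw: "\<not> kweak_connected k u"
  shows "u \<in> Xleft X k r i \<or> u \<in> Xright X k r i"
proof -
  define c where "c = umin k u"
  have S: "set u \<subset> {0..k}" using u unfolding Xset_def weak_hook_word_def by auto
  obtain j where hj: "hook X k u j" using u unfolding Xset_def weak_hook_word_def by auto
  have nc: "\<not> kconnected k u" and n2: "count_list u c \<noteq> 2" using nw c_def kweak_connected_def by auto
  obtain D b I where d: "u = D @ botw X b @ I" "length D = j" "sorted_wrt (\<lambda>x y. clt k (set u) y x) (D @ [b])"
     "sorted_wrt (clt k (set u)) (b # I)" using hook_decomp[OF hj] by blast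
  note bs = base[OF S nc d(1) d(3) d(4), folded c_def]
  have c1: "count_list u c = 1" using bs(4) bs(5) n2 by auto
  show ?thesis
  proof (cases "c \<in> set D")
    case True
    then obtain t where t: "t < length D" "D ! t = c" by (auto simp: in_set_conv_nth)
    have "u ! t = c" "t < length u" using t d(1) by (auto simp: nth_append)
    then have ex: "\<exists>j t. hook X k u j \<and> t < length u \<and> u ! t = umin k u \<and> on_left X j t"
      using hj t d(2) unfolding c_def on_left_def
      by (intro exI[of _ j] exI[of _ t]) auto
    then have "u \<in> Xleft X k r i" unfolding Xleft_def using u nw c1 c_def by auto
    then show ?thesis by simp
  next
    case False
    then have "c \<in> set I" using bs(4) by simp
    then obtain t where t: "t < length I" "I ! t = c" by (auto simp: in_set_conv_nth)
    define t' where "t' = length D + dlt X + t"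
    have "u ! t' = c" "t' < length u" using t d(1) unfolding t'_def by (auto simp: nth_append)
    moreover have "on_right X j t'" unfolding on_right_def t'_def dlt_def d(2)[symmetric] by (cases X) auto
    ultimately have ex: "\<exists>j t. hook X k u j \<and> t < length u \<and> u ! t = umin k u \<and> on_right X j t"
      using hj unfolding c_def
      by (intro exI[of _ j] exI[of _ t']) auto
    then have "u \<in> Xright X k r i" unfolding Xright_def using u nw c1 c_def by auto
    then show ?thesis by simp
  qed
qed

lemma disj:
  assumes l: "u \<in> Xleft X k r i" and rr: "u \<in> Xright X k r i"
  shows False
proof -
  define c where "c = umin k u"
  have S: "set u \<subset> {0..k}" and nc: "\<not> kconnected k u" and cnt: "count_list u c = 1"
    using l unfolding Xleft_def Xset_def weak_hook_word_def kweak_connected_def c_def by auto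
  obtain j t where jt: "hook X k u j" "t < length u" "u ! t = c" "on_left X j t"
    using l unfolding Xleft_def c_def by auto
  obtain D b I where d: "u = D @ botw X b @ I" "length D = j" "sorted_wrt (\<lambda>x y. clt k (set u) y x) (D @ [b])"
     "sorted_wrt (clt k (set u)) (b # I)" using hook_decomp[OF jt(1)] by blast
  obtain j' t' where jt': "hook X k u j'" "t' < length u" "u ! t' = c" "on_right X j' t'"
    using rr unfolding Xright_def c_def by auto
  obtain D' b' I' where d': "u = D' @ botw X b' @ I'" "length D' = j'" "sorted_wrt (\<lambda>x y. clt k (set u) y x) (D' @ [b'])"
     "sorted_wrt (clt k (set u)) (b' # I')" using hook_decomp[OF jt'(1)] by blast
  note bs = base[OF S nc d(1) d(3) d(4), folded c_def]
  note bs' = base[OF S nc d'(1) d'(3) d'(4), folded c_def]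
  have cD: "c \<in> set D" using pos_left[OF d(1) _ jt(3) bs(3)] jt(4) d(2) on_left_def by simp
  have "j' \<le> t'" using jt'(4) unfolding on_right_def by (cases X) auto
  then have cI': "c \<in> set I'" using pos_right[OF d'(1) _ jt'(2) jt'(3) bs'(3)] d'(2) by simp
  have bb: "b = b'"
  proof (rule ccontr)
    assume ne: "b \<noteq> b'"
    have "b \<in> set u" by (subst d(1)) simp
    moreover have "b' \<in> set u" by (subst d'(1)) simp
    ultimately have "clt k (set u) b b'" "clt k (set u) b' b" using bs(6) bs'(6) ne by auto
    then show False unfolding clt_def by simp
  qed
  have bD: "b \<notin> set D" "b' \<notin> set D'" using d(3) d'(3) unfolding clt_def by (auto simp: sorted_wrt_append)
  have "takeWhile (\<lambda>x. x \<noteq> b) u = D" using tw_bot[OF bD(1), of X I] d(1) by simp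
  moreover have "takeWhile (\<lambda>x. x \<noteq> b') u = D'" using tw_bot[OF bD(2), of X I'] d'(1) by simp
  ultimately have "D = D'" using bb by simp
  then have "I = I'" using d(1) d'(1) bb by simp
  then show False using cD cI' cnt bs(5) by simp
qed


lemma R2L:
  assumes u: "u \<in> Xright X k r i"
  shows "toL k (umin k u) u \<in> Xleft X k r (i - 1)"
    "toR k (umin k (toL k (umin k u) u)) (toL k (umin k u) u) = u"
    "same_value k u (toL k (umin k u) u)"
proof -
  define c where "c = umin k u"
  obtain D1 D2 b I1 I2 where e: "u = wR X D1 D2 b I1 I2 c" and co: "core k (set u) D1 D2 b I1 I2 c"
    using extractR[OF u, folded c_def] by blast
  have S: "set u \<subset> {0..k}" and nwc: "\<not> kweak_connected k u" and cnt: "count_list u c = 1"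
    and len: "int (length u) = r" and as: "int (asc k u) = i"
    using u unfolding Xright_def Xset_def weak_hook_word_def c_def by auto
  have nc: "\<not> kconnected k u" using nwc kweak_connected_def by auto
  have Sd: "set u = set (wR X D1 D2 b I1 I2 c)" by (subst e) (rule refl)
  have tl: "toL k c u = wL X D1 D2 b I1 I2 c" by (subst e) (rule toLR_core(1)[OF co Sd])
  have sL: "set (wL X D1 D2 b I1 I2 c) = set u" using Sd wLR_basic(1) by simp
  have umL: "umin k (wL X D1 D2 b I1 I2 c) = c" using set_dep(2)[OF sL, where k=k] unfolding c_def[symmetric] .
  have tr: "toR k c (wL X D1 D2 b I1 I2 c) = u" by (subst e) (rule toLR_core(2)[OF co Sd])
  show "toR k (umin k (toL k (umin k u) u)) (toL k (umin k u) u) = u"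
    unfolding c_def[symmetric] tl umL tr ..
  have nc': "\<not> kconnected k (wR X D1 D2 b I1 I2 c)" unfolding e[symmetric] by (rule nc)
  have um': "umin k (wR X D1 D2 b I1 I2 c) = c" unfolding e[symmetric] by (simp add: c_def)
  have cnt': "count_list (wR X D1 D2 b I1 I2 c) c = 1" unfolding e[symmetric] by (rule cnt)
  have Sk: "set u \<subset> {0..k}" by (rule S)
  have mem: "wL X D1 D2 b I1 I2 c \<in> Xleft X k (int (length (wL X D1 D2 b I1 I2 c))) (int (asc k (wL X D1 D2 b I1 I2 c)))"
    using build(1)[OF co Sd Sk nc' um' cnt'] .
  have l1: "int (length (wL X D1 D2 b I1 I2 c)) = r"
    using len wLR_basic(2)[of X D1 D2 b I1 I2 c] unfolding e[symmetric] by simp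
  have a1: "int (asc k (wL X D1 D2 b I1 I2 c)) = i - 1"
    using as core_asc[OF co Sd] unfolding e[symmetric] by simp
  show "toL k (umin k u) u \<in> Xleft X k r (i - 1)"
    using mem unfolding c_def[symmetric] tl l1 a1 .
  have comm: "\<forall>x\<in>set (D2 @ botw X b @ I1). ([x, c], [c, x]) \<in> krels k"
  proof
    fix x assume x: "x \<in> set (D2 @ botw X b @ I1)"
    then have "x \<in> set u" by (subst e) (auto simp: wR_def)
    moreover have "clt k (set u) x c" using x co unfolding core_def by auto
    ultimately show "([x, c], [c, x]) \<in> krels k"
      using umin_facts(3)[OF S nc] c_def by simp
  qed
  have sub: "set (D1 @ (D2 @ botw X b @ I1) @ I2) \<subseteq> {0..k}"
  proof -
    have "set (D1 @ (D2 @ botw X b @ I1) @ I2) \<subseteq> set u" by (subst e) (auto simp: wR_def)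
    then show ?thesis using S by auto
  qed
  have "same_value k (D1 @ (D2 @ botw X b @ I1) @ [c] @ I2) (D1 @ [c] @ (D2 @ botw X b @ I1) @ I2)"
    by (rule sv_move[OF comm sub])
  then have "same_value k (wR X D1 D2 b I1 I2 c) (wL X D1 D2 b I1 I2 c)"
    unfolding wR_def wL_def by simp
  then show "same_value k u (toL k (umin k u) u)"
    unfolding c_def[symmetric] tl e[symmetric] .
qed

lemma L2R:
  assumes u: "u \<in> Xleft X k r i"
  shows "toR k (umin k u) u \<in> Xright X k r (i + 1)"
    "toL k (umin k (toR k (umin k u) u)) (toR k (umin k u) u) = u"
proof -
  define c where "c = umin k u"
  obtain D1 D2 b I1 I2 where e: "u = wL X D1 D2 b I1 I2 c" and co: "core k (set u) D1 D2 b I1 I2 c"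
    using extractL[OF u, folded c_def] by blast
  have S: "set u \<subset> {0..k}" and nwc: "\<not> kweak_connected k u" and cnt: "count_list u c = 1"
    and len: "int (length u) = r" and as: "int (asc k u) = i"
    using u unfolding Xleft_def Xset_def weak_hook_word_def c_def by auto
  have nc: "\<not> kconnected k u" using nwc kweak_connected_def by auto
  have SdL: "set u = set (wL X D1 D2 b I1 I2 c)" by (subst e) (rule refl)
  have Sd: "set u = set (wR X D1 D2 b I1 I2 c)" using SdL wLR_basic(1) by simp
  have tr: "toR k c u = wR X D1 D2 b I1 I2 c" by (subst e) (rule toLR_core(2)[OF co Sd])
  have umR: "umin k (wR X D1 D2 b I1 I2 c) = c" using set_dep(2)[OF Sd, where k=k] unfolding c_def[symmetric] by (rule sym)
  have tl: "toL k c (wR X D1 D2 b I1 I2 c) = u" by (subst e) (rule toLR_core(1)[OF co Sd])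
  show "toL k (umin k (toR k (umin k u) u)) (toR k (umin k u) u) = u"
    unfolding c_def[symmetric] tr umR tl ..
  have nc': "\<not> kconnected k (wR X D1 D2 b I1 I2 c)" using set_dep(3)[OF Sd] nc by simp
  have cnt': "count_list (wR X D1 D2 b I1 I2 c) c = 1"
    using cnt wLR_basic(3)[of X D1 D2 b I1 I2 c c] unfolding e[symmetric] by simp
  have Sk: "set u \<subset> {0..k}" by (rule S)
  have mem: "wR X D1 D2 b I1 I2 c \<in> Xright X k (int (length (wR X D1 D2 b I1 I2 c))) (int (asc k (wR X D1 D2 b I1 I2 c)))"
    using build(2)[OF co Sd Sk nc' umR cnt'] .
  have l1: "int (length (wR X D1 D2 b I1 I2 c)) = r"
    using len wLR_basic(2)[of X D1 D2 b I1 I2 c] unfolding e[symmetric] by simp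
  have a1: "int (asc k (wR X D1 D2 b I1 I2 c)) = i + 1"
    using as core_asc[OF co Sd] unfolding e[symmetric] by simp
  show "toR k (umin k u) u \<in> Xright X k r (i + 1)"
    using mem unfolding c_def[symmetric] tr l1 a1 .
qed

lemma right_asc_pos:
  assumes u: "u \<in> Xright X k r i"
  shows "asc k u \<ge> 1"
proof -
  define c where "c = umin k u"
  obtain D1 D2 b I1 I2 where e: "u = wR X D1 D2 b I1 I2 c" and co: "core k (set u) D1 D2 b I1 I2 c"
    using extractR[OF u, folded c_def] by blast
  have Sd: "set u = set (wR X D1 D2 b I1 I2 c)" by (subst e) (rule refl)
  have "asc k (wR X D1 D2 b I1 I2 c) + (length D1 + length D2) + dlt X = length (wR X D1 D2 b I1 I2 c)"
    using asc_hook[OF core_hooks(2)[OF co Sd]] .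
  then have "asc k (wR X D1 D2 b I1 I2 c) \<ge> 1" unfolding wR_def by simp
  then show ?thesis using e by simp
qed

lemma left_asc:
  assumes u: "u \<in> Xleft X k r i"
  shows "asc k u + 1 + dlt X \<le> length u"
proof -
  define c where "c = umin k u"
  obtain D1 D2 b I1 I2 where e: "u = wL X D1 D2 b I1 I2 c" and co: "core k (set u) D1 D2 b I1 I2 c"
    using extractL[OF u, folded c_def] by blast
  have Sd: "set u = set (wR X D1 D2 b I1 I2 c)" using wLR_basic(1) by (subst e) simp
  have "asc k (wL X D1 D2 b I1 I2 c) + (length D1 + 1 + length D2) + dlt X = length (wL X D1 D2 b I1 I2 c)"
    using asc_hook[OF core_hooks(1)[OF co Sd]] .
  then have "asc k (wL X D1 D2 b I1 I2 c) + 1 + dlt X \<le> length (wL X D1 D2 b I1 I2 c)" by simp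
  then show ?thesis using e by simp
qed

theorem lemma5p3:
  fixes k :: nat and X :: hooktype and r i :: int
  shows "(Xset X k r i = Xwc X k r i \<union> Xleft X k r i \<union> Xright X k r i
          \<and> Xwc X k r i \<inter> Xleft X k r i = {}
          \<and> Xwc X k r i \<inter> Xright X k r i = {}
          \<and> Xleft X k r i \<inter> Xright X k r i = {})
       \<and> (\<exists>f. bij_betw f (Xright X k r i) (Xleft X k r (i - 1))
              \<and> (\<forall>u \<in> Xright X k r i. same_value k u (f u)))
       \<and> Xright X k r 0 = {}
       \<and> Xleft V k r (r - 1) = {}
       \<and> Xleft U k r (r - 2) = {}
       \<and> (i < 0 \<longrightarrow> Xset X k r i = {})"
proof -
  have P1a: "Xset X k r i = Xwc X k r i \<union> Xleft X k r i \<union> Xright X k r i"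
  proof
    show "Xset X k r i \<subseteq> Xwc X k r i \<union> Xleft X k r i \<union> Xright X k r i"
    proof
      fix u assume u: "u \<in> Xset X k r i"
      show "u \<in> Xwc X k r i \<union> Xleft X k r i \<union> Xright X k r i"
      proof (cases "kweak_connected k u")
        case True then show ?thesis using u unfolding Xwc_def by simp
      next
        case False then show ?thesis using cover[OF u] by simp
      qed
    qed
    show "Xwc X k r i \<union> Xleft X k r i \<union> Xright X k r i \<subseteq> Xset X k r i"
      unfolding Xwc_def Xleft_def Xright_def by auto
  qed
  have P1b: "Xwc X k r i \<inter> Xleft X k r i = {}" "Xwc X k r i \<inter> Xright X k r i = {}"
    unfolding Xwc_def Xleft_def Xright_def by auto
  have P1c: "Xleft X k r i \<inter> Xright X k r i = {}" using disj by blast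
  define f where "f = (\<lambda>u. toL k (umin k u) u)"
  define g where "g = (\<lambda>u. toR k (umin k u) u)"
  have bij: "bij_betw f (Xright X k r i) (Xleft X k r (i - 1))"
  proof (rule bij_betw_byWitness[where f'=g])
    show "\<forall>a\<in>Xright X k r i. g (f a) = a" unfolding f_def g_def using R2L(2) by blast
    show "\<forall>a\<in>Xleft X k r (i - 1). f (g a) = a" unfolding f_def g_def using L2R(2) by blast
    show "f ` Xright X k r i \<subseteq> Xleft X k r (i - 1)" unfolding f_def using R2L(1) by blast
    show "g ` Xleft X k r (i - 1) \<subseteq> Xright X k r i" unfolding g_def using L2R(1)[of _ X k r "i - 1"] by auto
  qed
  have sv: "\<forall>u \<in> Xright X k r i. same_value k u (f u)" unfolding f_def using R2L(3) by blast
  have P3: "Xright X k r 0 = {}"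
  proof -
    have "\<And>u. u \<in> Xright X k r 0 \<Longrightarrow> False"
    proof -
      fix u assume u: "u \<in> Xright X k r 0"
      then have "int (asc k u) = 0" unfolding Xright_def Xset_def by simp
      then show False using right_asc_pos[OF u] by simp
    qed
    then show ?thesis by blast
  qed
  have P4: "Xleft V k r (r - 1) = {}"
  proof -
    have "\<And>u. u \<in> Xleft V k r (r - 1) \<Longrightarrow> False"
    proof -
      fix u assume u: "u \<in> Xleft V k r (r - 1)"
      then have "int (asc k u) = r - 1" "int (length u) = r" unfolding Xleft_def Xset_def by auto
      then show False using left_asc[OF u] by (simp add: dlt_def)
    qed
    then show ?thesis by blast
  qed
  have P5: "Xleft U k r (r - 2) = {}"
  proof -
    have "\<And>u. u \<in> Xleft U k r (r - 2) \<Longrightarrow> False"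
    proof -
      fix u assume u: "u \<in> Xleft U k r (r - 2)"
      then have "int (asc k u) = r - 2" "int (length u) = r" unfolding Xleft_def Xset_def by auto
      then show False using left_asc[OF u] by (simp add: dlt_def)
    qed
    then show ?thesis by blast
  qed
  have P6: "i < 0 \<longrightarrow> Xset X k r i = {}" unfolding Xset_def by auto
  have P2: "\<exists>f. bij_betw f (Xright X k r i) (Xleft X k r (i - 1))
              \<and> (\<forall>u \<in> Xright X k r i. same_value k u (f u))"
    using bij sv by blast
  show ?thesis
    apply (intro conjI)
            apply (fact P1a)
           apply (fact P1b(1))
          apply (fact P1b(2))
         apply (fact P1c)
        apply (fact P2)
       apply (fact P3)
      apply (fact P4)
     apply (fact P5)
    apply (fact P6)
    done
qed

end
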